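(* Let $f\in L^2(\Omega)$ with $\int_\Omega f\ne0$, and let $u\in BV(\Omega;[0,1])$ be not identically equal to $1$. Let $S(u)\in H^1(\Omega)$ be the solution of $\int_\Omega a(u)\nabla S(u)\cdot\nabla v+\int_\Omega b(u)S(u)^3v=\int_\Omega fv$ for all $v\in H^1(\Omega)$. Then there exist a measurable $\Omega^*\subset\Omega$ with $|\Omega^*|\ne0$ and $Q>0$ such that $b(u)S(u)^2\ge Q$ a.e. in $\Omega^*$.
   Context: $\Omega\subset\mathbb{R}^2$ bounded Lipschitz domain, $0<k<1$, $a(u)=1-(1-k)u$, $b(u)=1-u$. *)

theory Defs
  imports "HOL-Analysis.Analysis"
begin

definition coef_a :: "real \<Rightarrow> real \<Rightarrow> real" where
  "coef_a k u = 1 - (1 - k) * u"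

definition coef_b :: "real \<Rightarrow> real" where
  "coef_b u = 1 - u"

definition lipschitz_domain :: "(real^2) set \<Rightarrow> bool" where
  "lipschitz_domain \<Omega> \<longleftrightarrow> open \<Omega> \<and> connected \<Omega> \<and> \<Omega> \<noteq> {} \<and>
     (\<forall>x\<in>frontier \<Omega>. \<exists>r>0. \<exists>R::real^2\<Rightarrow>real^2. \<exists>\<gamma>::real\<Rightarrow>real. \<exists>L.
        orthogonal_transformation R \<and> (\<forall>s t. \<bar>\<gamma> s - \<gamma> t\<bar> \<le> L * \<bar>s - t\<bar>) \<and>
        (\<forall>y\<in>ball x r. y \<in> \<Omega> \<longleftrightarrow> (R (y - x)) $ 2 < \<gamma> ((R (y - x)) $ 1)))"

definition bounded_lipschitz_domain :: "(real^2) set \<Rightarrow> bool" where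
  "bounded_lipschitz_domain \<Omega> \<longleftrightarrow> bounded \<Omega> \<and> lipschitz_domain \<Omega>"

definition pderiv :: "2 \<Rightarrow> (real^2 \<Rightarrow> 'b::real_normed_vector) \<Rightarrow> real^2 \<Rightarrow> 'b" where
  "pderiv i f x = frechet_derivative f (at x) (axis i 1)"

fun Ck :: "nat \<Rightarrow> (real^2 \<Rightarrow> 'b::real_normed_vector) \<Rightarrow> bool" where
  "Ck 0 f = continuous_on UNIV f"
| "Ck (Suc n) f = (f differentiable_on UNIV \<and> continuous_on UNIV f \<and>
                   (\<forall>i. Ck n (pderiv i f)))"

definition smooth :: "(real^2 \<Rightarrow> 'b::real_normed_vector) \<Rightarrow> bool" where
  "smooth f \<longleftrightarrow> (\<forall>n. Ck n f)"

definition compact_support_in :: "(real^2 \<Rightarrow> 'b::real_normed_vector) \<Rightarrow> (real^2) set \<Rightarrow> bool" where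
  "compact_support_in f \<Omega> \<longleftrightarrow> compact (closure {x. f x \<noteq> 0}) \<and> closure {x. f x \<noteq> 0} \<subseteq> \<Omega>"

definition test_fun :: "(real^2) set \<Rightarrow> (real^2 \<Rightarrow> real) \<Rightarrow> bool" where
  "test_fun \<Omega> \<phi> \<longleftrightarrow> smooth \<phi> \<and> compact_support_in \<phi> \<Omega>"

definition C1c_field :: "(real^2) set \<Rightarrow> (real^2 \<Rightarrow> real^2) \<Rightarrow> bool" where
  "C1c_field \<Omega> \<phi> \<longleftrightarrow> Ck 1 \<phi> \<and> compact_support_in \<phi> \<Omega>"

definition divergence :: "(real^2 \<Rightarrow> real^2) \<Rightarrow> real^2 \<Rightarrow> real" where
  "divergence \<phi> x = (\<Sum>i\<in>UNIV. pderiv i \<phi> x $ i)"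

definition L1 :: "(real^2) set \<Rightarrow> (real^2 \<Rightarrow> real) \<Rightarrow> bool" where
  "L1 \<Omega> f \<longleftrightarrow> integrable (lebesgue_on \<Omega>) f"

definition L2 :: "(real^2) set \<Rightarrow> (real^2 \<Rightarrow> 'b::euclidean_space) \<Rightarrow> bool" where
  "L2 \<Omega> f \<longleftrightarrow> f \<in> borel_measurable (lebesgue_on \<Omega>) \<and>
                integrable (lebesgue_on \<Omega>) (\<lambda>x. (norm (f x))\<^sup>2)"

definition is_weak_grad :: "(real^2) set \<Rightarrow> (real^2 \<Rightarrow> real) \<Rightarrow> (real^2 \<Rightarrow> real^2) \<Rightarrow> bool" where
  "is_weak_grad \<Omega> u g \<longleftrightarrow>
     (\<forall>\<phi>. test_fun \<Omega> \<phi> \<longrightarrow> (\<forall>i.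
        integrable (lebesgue_on \<Omega>) (\<lambda>x. u x * pderiv i \<phi> x) \<and>
        integrable (lebesgue_on \<Omega>) (\<lambda>x. g x $ i * \<phi> x) \<and>
        (\<integral>x. u x * pderiv i \<phi> x \<partial>lebesgue_on \<Omega>) = - (\<integral>x. g x $ i * \<phi> x \<partial>lebesgue_on \<Omega>)))"

definition H1 :: "(real^2) set \<Rightarrow> (real^2 \<Rightarrow> real) \<Rightarrow> bool" where
  "H1 \<Omega> u \<longleftrightarrow> L2 \<Omega> u \<and> (\<exists>g. is_weak_grad \<Omega> u g \<and> L2 \<Omega> g)"

text \<open>The (a.e. unique) weak gradient of an H^1 function.\<close>
definition wgrad :: "(real^2) set \<Rightarrow> (real^2 \<Rightarrow> real) \<Rightarrow> real^2 \<Rightarrow> real^2" where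
  "wgrad \<Omega> u = (SOME g. is_weak_grad \<Omega> u g \<and> L2 \<Omega> g)"

definition BV01 :: "(real^2) set \<Rightarrow> (real^2 \<Rightarrow> real) \<Rightarrow> bool" where
  "BV01 \<Omega> u \<longleftrightarrow> L1 \<Omega> u \<and> (AE x in lebesgue_on \<Omega>. 0 \<le> u x \<and> u x \<le> 1) \<and>
     (\<exists>M. \<forall>\<phi>. C1c_field \<Omega> \<phi> \<and> (\<forall>x. norm (\<phi> x) \<le> 1) \<longrightarrow>
        (\<integral>x. u x * divergence \<phi> x \<partial>lebesgue_on \<Omega>) \<le> M)"

end

theory Submission
  imports Defs
begin


fun S1 :: "nat \<Rightarrow> (real \<Rightarrow> real) \<Rightarrow> bool" where
  "S1 0 f = True"
| "S1 (Suc n) f = (\<exists>f'. (\<forall>t. (f has_real_derivative f' t) (at t)) \<and> S1 n f')"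

lemma S1_add: "S1 n f \<Longrightarrow> S1 n g \<Longrightarrow> S1 n (\<lambda>t. f t + g t)"
proof (induction n arbitrary: f g)
  case (Suc n)
  then obtain f' g' where "\<forall>t. (f has_real_derivative f' t) (at t)" "S1 n f'"
     "\<forall>t. (g has_real_derivative g' t) (at t)" "S1 n g'" by auto
  then show ?case using Suc.IH by (auto intro!: exI[of _ "\<lambda>t. f' t + g' t"] derivative_eq_intros)
qed simp

lemma S1_cmult: "S1 n f \<Longrightarrow> S1 n (\<lambda>t. c * f t)"
proof (induction n arbitrary: f)
  case (Suc n)
  then obtain f' where "\<forall>t. (f has_real_derivative f' t) (at t)" "S1 n f'" by auto
  then show ?case using Suc.IH by (auto intro!: exI[of _ "\<lambda>t. c * f' t"] derivative_eq_intros)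
qed simp

definition ek :: "real \<Rightarrow> nat \<Rightarrow> real \<Rightarrow> real" where
  "ek c k s = (if s > 0 then (1/s)^k * exp (-c/s) else 0)"

lemma ek_lim0:
  assumes "(c::real) > 0"
  shows "((\<lambda>s. (1/s)^k * exp (-c/s)) \<longlongrightarrow> 0) (at_right 0)"
proof -
  have "((\<lambda>x. (x/c)^k * exp (-x)) \<longlongrightarrow> 0) at_top"
  proof -
    have "((\<lambda>x. (1/c)^k * (x ^ k / exp x)) \<longlongrightarrow> (1/c)^k * 0) at_top"
      by (rule tendsto_mult[OF tendsto_const tendsto_power_div_exp_0])
    then show ?thesis by (simp add: power_divide exp_minus field_simps)
  qed
  moreover have "filterlim (\<lambda>s. c / s) at_top (at_right 0)"
    using filterlim_tendsto_pos_mult_at_top[OF tendsto_const assms filterlim_inverse_at_top_right]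
    by (simp add: divide_inverse)
  ultimately have "((\<lambda>s. ((c/s)/c)^k * exp (-(c/s))) \<longlongrightarrow> 0) (at_right 0)"
    by (rule filterlim_compose)
  moreover have "eventually (\<lambda>s. ((c/s)/c)^k * exp (-(c/s)) = (1/s)^k * exp (-c/s)) (at_right 0)"
    unfolding eventually_at_right_field using assms by (intro exI[of _ 1]) (auto simp: field_simps)
  ultimately show ?thesis by (rule Lim_transform_eventually)
qed

lemma ek_deriv:
  assumes c: "(c::real) > 0"
  shows "(ek c k has_real_derivative (- real k * ek c (Suc k) s + c * ek c (Suc (Suc k)) s)) (at s)"
proof (cases "s > 0")
  case True
  have "((\<lambda>t. (1/t)^k * exp (-c/t)) has_real_derivative
      (- real k * ek c (Suc k) s + c * ek c (Suc (Suc k)) s)) (at s)"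
  proof (cases k)
    have pw: "\<And>m. m \<noteq> 0 \<Longrightarrow> s * s ^ (m - Suc 0) = s ^ m"
      by (metis Suc_pred neq0_conv power_Suc)
    case 0 then show ?thesis using True by (auto intro!: derivative_eq_intros simp: ek_def field_simps power2_eq_square)
  next
    have pw: "\<And>m. m \<noteq> 0 \<Longrightarrow> s * s ^ (m - Suc 0) = s ^ m"
      by (metis Suc_pred neq0_conv power_Suc)
    case (Suc m) then show ?thesis using True pw[of m] by (cases "m = 0") (auto intro!: derivative_eq_intros simp: ek_def field_simps power2_eq_square)
  qed
  then show ?thesis
    by (rule has_field_derivative_transform_within_open[of _ _ _ "{0<..}"]) (use True in \<open>auto simp: ek_def\<close>)
next
  case False
  show ?thesis
  proof (cases "s < 0")
    case True
    have "((\<lambda>t. 0) has_real_derivative 0) (at s)" by simp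
    then have "(ek c k has_real_derivative 0) (at s)"
      by (rule has_field_derivative_transform_within_open[of _ _ _ "{..<0}"]) (use True in \<open>auto simp: ek_def\<close>)
    then show ?thesis using True by (simp add: ek_def)
  next
    case False
    with \<open>\<not> s > 0\<close> have s0: "s = 0" by simp
    have "((\<lambda>y. (ek c k y - ek c k 0) / (y - 0)) \<longlongrightarrow> 0) (at 0)"
    proof (rule filterlim_split_at)
      have "((\<lambda>y. 0::real) \<longlongrightarrow> 0) (at_left 0)" by simp
      moreover have "eventually (\<lambda>y. 0 = (ek c k y - ek c k 0) / (y - 0)) (at_left (0::real))"
        unfolding eventually_at_left_field by (intro exI[of _ "-1"]) (auto simp: ek_def)
      ultimately show "((\<lambda>y. (ek c k y - ek c k 0) / (y - 0)) \<longlongrightarrow> 0) (at_left 0)"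
        by (rule Lim_transform_eventually)
    next
      have "((\<lambda>s. (1/s)^Suc k * exp (-c/s)) \<longlongrightarrow> 0) (at_right 0)" by (rule ek_lim0[OF c])
      moreover have "eventually (\<lambda>y. (1/y)^Suc k * exp (-c/y) = (ek c k y - ek c k 0) / (y - 0)) (at_right (0::real))"
        unfolding eventually_at_right_field by (intro exI[of _ "1"]) (auto simp: ek_def field_simps)
      ultimately show "((\<lambda>y. (ek c k y - ek c k 0) / (y - 0)) \<longlongrightarrow> 0) (at_right 0)"
        by (rule Lim_transform_eventually)
    qed
    then have "(ek c k has_real_derivative 0) (at 0)"
      by (subst has_field_derivative_iff) simp
    then show ?thesis using s0 by (simp add: ek_def)
  qed
qed

lemma S1_ek: "(c::real) > 0 \<Longrightarrow> S1 n (ek c k)"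
proof (induction n arbitrary: k)
  case (Suc n)
  have "S1 n (\<lambda>s. - real k * ek c (Suc k) s + c * ek c (Suc (Suc k)) s)"
    by (intro S1_add S1_cmult Suc)
  moreover have "\<forall>t. (ek c k has_real_derivative (- real k * ek c (Suc k) t + c * ek c (Suc (Suc k)) t)) (at t)"
    using ek_deriv[OF Suc.prems, of k] by blast
  ultimately show ?case
    by (simp only: S1.simps) (rule exI[of _ "\<lambda>s. - real k * ek c (Suc k) s + c * ek c (Suc (Suc k)) s"], simp)
qed simp

lemma ek_nonneg: "0 \<le> ek c k s" by (simp add: ek_def)
lemma ek0_le1: "c \<ge> 0 \<Longrightarrow> ek c 0 s \<le> 1" by (simp add: ek_def)
lemma ek0_pos: "s > 0 \<Longrightarrow> ek c 0 s > 0" by (simp add: ek_def)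
lemma ek0_zero: "s \<le> 0 \<Longrightarrow> ek c 0 s = 0" by (simp add: ek_def)



lemma pderiv_eq: "(f has_derivative f') (at x) \<Longrightarrow> pderiv i f x = f' (axis i 1)"
  unfolding pderiv_def by (metis frechet_derivative_at)

lemma diff_has: "f differentiable_on UNIV \<Longrightarrow> (f has_derivative frechet_derivative f (at x)) (at x)"
  by (simp add: differentiable_on_def frechet_derivative_works)

lemma Ck_mono: "Ck (Suc n) f \<Longrightarrow> Ck n f"
proof (induction n arbitrary: f)
  case 0 then show ?case by simp
next
  case (Suc n)
  from Suc.prems have a: "f differentiable_on UNIV" "continuous_on UNIV f" "\<forall>i. Ck (Suc n) (pderiv i f)"
    by (subst (asm) Ck.simps(2), blast)+
  show ?case using a Suc.IH by (subst Ck.simps(2)) blast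
qed

lemma Ck_const: "Ck n (\<lambda>x. c)"
proof (induction n arbitrary: c)
  case (Suc n)
  have "pderiv i (\<lambda>x. c) = (\<lambda>x. 0)" for i
    by (rule ext, rule pderiv_eq[of _ "\<lambda>h. 0", simplified]) (rule has_derivative_const)
  then show ?case using Suc.IH by simp
qed simp

lemma Ck_add: "Ck n f \<Longrightarrow> Ck n g \<Longrightarrow> Ck n (\<lambda>x. f x + g x)"
proof (induction n arbitrary: f g)
  case 0 then show ?case by (auto intro: continuous_on_add)
next
  case (Suc n)
  have df: "f differentiable_on UNIV" and dg: "g differentiable_on UNIV" using Suc.prems by auto
  have "pderiv i (\<lambda>x. f x + g x) = (\<lambda>x. pderiv i f x + pderiv i g x)" for i
  proof
    fix x
    have "((\<lambda>x. f x + g x) has_derivative (\<lambda>h. frechet_derivative f (at x) h + frechet_derivative g (at x) h)) (at x)"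
      by (intro has_derivative_add diff_has df dg)
    from pderiv_eq[OF this, of i] show "pderiv i (\<lambda>x. f x + g x) x = pderiv i f x + pderiv i g x"
      by (simp add: pderiv_def)
  qed
  then show ?case using Suc by (auto intro: differentiable_on_add continuous_on_add)
qed

lemma Ck_mult: "Ck n f \<Longrightarrow> Ck n g \<Longrightarrow> Ck n (\<lambda>x. f x * (g x :: real))"
proof (induction n arbitrary: f g)
  case 0 then show ?case by (auto intro: continuous_on_mult)
next
  case (Suc n)
  have df: "f differentiable_on UNIV" and dg: "g differentiable_on UNIV" using Suc.prems by auto
  have "pderiv i (\<lambda>x. f x * g x) = (\<lambda>x. pderiv i f x * g x + f x * pderiv i g x)" for i
  proof
    fix x
    have "((\<lambda>x. f x * g x) has_derivative (\<lambda>h. f x * frechet_derivative g (at x) h + frechet_derivative f (at x) h * g x)) (at x)"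
      by (intro has_derivative_mult diff_has df dg)
    from pderiv_eq[OF this, of i] show "pderiv i (\<lambda>x. f x * g x) x = pderiv i f x * g x + f x * pderiv i g x"
      by (simp add: pderiv_def)
  qed
  moreover have "Ck n (\<lambda>x. pderiv i f x * g x + f x * pderiv i g x)" for i
    using Suc by (intro Ck_add Suc.IH) (auto intro: Ck_mono)
  ultimately show ?case using Suc.prems by (auto intro: differentiable_on_mult continuous_on_mult)
qed

lemma Ck_comp:
  fixes h :: "real \<Rightarrow> real"
  shows "S1 (Suc n) h \<Longrightarrow> Ck n (\<lambda>x::real^2. h (s * x $ j + r))"
proof (induction n arbitrary: h)
  have inner: "((\<lambda>x::real^2. s * x $ j + r) has_derivative (\<lambda>v. s * v $ j)) (at x)" for x
  proof -
    have "((\<lambda>x::real^2. x $ j) has_derivative (\<lambda>v. v $ j)) (at x)"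
      by (rule bounded_linear_imp_has_derivative) (rule bounded_linear_vec_nth)
    then show ?thesis by (auto intro!: derivative_eq_intros)
  qed
  have hd: "((\<lambda>x::real^2. h (s * x $ j + r)) has_derivative (\<lambda>v. h' (s * x $ j + r) * (s * v $ j))) (at x)"
    if "\<And>t. (h has_real_derivative h' t) (at t)" for x h h'
    using has_derivative_compose[OF inner that[of "s * x $ j + r", unfolded has_field_derivative_def]]
    by simp
  have cont: "continuous_on UNIV (\<lambda>x::real^2. h (s * x $ j + r))"
    if "\<And>t. (h has_real_derivative h' t) (at t)" for h h'
    using hd[OF that] by (intro continuous_at_imp_continuous_on) (blast intro: has_derivative_continuous)
  {
    case 0 then show ?case using cont by auto
  next
    case (Suc n)
    then obtain h' where h': "\<And>t. (h has_real_derivative h' t) (at t)" "S1 (Suc n) h'" by auto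
    have "pderiv i (\<lambda>x::real^2. h (s * x $ j + r)) = (\<lambda>x. (if i = j then s else 0) * h' (s * x $ j + r))" for i
      by (rule ext, subst pderiv_eq[OF hd[OF h'(1)]]) (simp add: axis_def)
    moreover have "Ck n (\<lambda>x::real^2. (if i = j then s else 0) * h' (s * x $ j + r))" for i
      by (intro Ck_mult Ck_const Suc.IH h')
    ultimately show ?case using hd[OF h'(1)] cont[OF h'(1)]
      by (auto simp: differentiable_on_def differentiable_def)
  }
qed



definition bump :: "real \<Rightarrow> real^2 \<Rightarrow> real^2 \<Rightarrow> real^2 \<Rightarrow> real" where
  "bump c a b x = ek c 0 (x$1 - a$1) * ek c 0 (b$1 - x$1) * ek c 0 (x$2 - a$2) * ek c 0 (b$2 - x$2)"

lemma Ck_bump: "c > 0 \<Longrightarrow> Ck n (bump c a b)"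
proof -
  assume c: "c > 0"
  have e: "S1 (Suc n) (ek c 0)" by (rule S1_ek[OF c])
  have l: "Ck n (\<lambda>x::real^2. ek c 0 (1 * x $ j + (- a $ j)))" for j
    by (rule Ck_comp[OF e])
  have r: "Ck n (\<lambda>x::real^2. ek c 0 ((-1) * x $ j + b $ j))" for j
    by (rule Ck_comp[OF e])
  have "Ck n (\<lambda>x::real^2. ek c 0 (1 * x $ 1 + (- a $ 1)) * ek c 0 ((-1) * x $ 1 + b $ 1)
       * ek c 0 (1 * x $ 2 + (- a $ 2)) * ek c 0 ((-1) * x $ 2 + b $ 2))"
    by (intro Ck_mult l r)
  then show ?thesis unfolding bump_def[abs_def] by simp
qed

lemma smooth_bump: "c > 0 \<Longrightarrow> smooth (bump c a b)"
  unfolding smooth_def using Ck_bump by blast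

lemma bump_nz: "bump c a b x \<noteq> 0 \<longleftrightarrow> x \<in> box a b"
proof -
  have ek_nz: "ek c 0 s \<noteq> 0 \<longleftrightarrow> s > 0" for s by (simp add: ek_def)
  show ?thesis unfolding bump_def mem_box_cart forall_2 using ek_nz by auto
qed

lemma bump_support: "closure {x. bump c a b x \<noteq> 0} \<subseteq> cbox a b"
  unfolding bump_nz by (metis Collect_mem_eq box_subset_cbox closed_cbox closure_minimal)

lemma test_bump: "c > 0 \<Longrightarrow> closure (box a b) \<subseteq> \<Omega> \<Longrightarrow> test_fun \<Omega> (bump c a b)"
  unfolding test_fun_def compact_support_in_def
  using smooth_bump
  by (auto intro!: compact_closure[THEN iffD2] bounded_subset[OF bounded_cbox]
      simp: bump_nz box_subset_cbox)

lemma bump_nonneg: "0 \<le> bump c a b x"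
  by (simp add: bump_def ek_nonneg)

lemma bump_le1: "c \<ge> 0 \<Longrightarrow> bump c a b x \<le> 1"
  unfolding bump_def using ek_nonneg ek0_le1
  by (meson mult_le_one mult_nonneg_nonneg)

lemma bump_cont: "c > 0 \<Longrightarrow> continuous_on UNIV (bump c a b)"
  using Ck_bump[of c 0] by simp

lemma bump_lim: "(\<lambda>n. bump (1 / Suc n) a b x) \<longlonglongrightarrow> indicator (box a b) x"
proof (cases "x \<in> box a b")
  case True
  then have pos: "x$1 - a$1 > 0" "b$1 - x$1 > 0" "x$2 - a$2 > 0" "b$2 - x$2 > 0"
    by (auto simp: mem_box_cart)
  have l: "(\<lambda>n. ek (1 / Suc n) 0 s) \<longlonglongrightarrow> 1" if "s > 0" for s
  proof -
    have "(\<lambda>n. exp (- (1 / real (Suc n)) / s)) \<longlonglongrightarrow> exp (- 0 / s)"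
      by (intro tendsto_intros LIMSEQ_Suc lim_const_over_n) (use that in auto)
    then show ?thesis using that by (simp add: ek_def)
  qed
  have "(\<lambda>n. bump (1 / Suc n) a b x) \<longlonglongrightarrow> 1 * 1 * 1 * 1"
    unfolding bump_def by (intro tendsto_mult l pos)
  then show ?thesis using True by simp
next
  case False
  then have "\<And>n. bump (1 / Suc n) a b x = 0" using bump_nz by blast
  then show ?thesis using False by simp
qed



lemma ae_box_zero:
  fixes w :: "real^2 \<Rightarrow> real"
  assumes w: "integrable lborel w"
  and Z: "\<And>a b. box a b \<subseteq> box a0 b0 \<Longrightarrow> (\<integral>x. w x * indicator (box a b) x \<partial>lborel) = 0"
  shows "AE x in lborel. x \<in> box a0 b0 \<longrightarrow> w x = 0"
proof -
  define B0 where "B0 = box a0 b0"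
  have wm[measurable]: "w \<in> borel_measurable borel" using borel_measurable_integrable[OF w] by simp
  have B0m[measurable]: "B0 \<in> sets borel" by (simp add: B0_def)
  define g1 where "g1 x = max 0 (w x) * indicator B0 x" for x
  define g2 where "g2 x = max 0 (- w x) * indicator B0 x" for x
  have g1m[measurable]: "g1 \<in> borel_measurable borel" unfolding g1_def by measurable
  have g2m[measurable]: "g2 \<in> borel_measurable borel" unfolding g2_def by measurable
  have intg1: "integrable lborel (\<lambda>x. g1 x * indicator A x)" if "A \<in> sets borel" for A
    unfolding g1_def using that
    by (intro integrable_real_mult_indicator integrable_max w) auto
  have intg2: "integrable lborel (\<lambda>x. g2 x * indicator A x)" if "A \<in> sets borel" for A
    unfolding g2_def using that
    by (intro integrable_real_mult_indicator integrable_max integrable_minus w) auto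
  have em1: "emeasure (density lborel (\<lambda>x. ennreal (g1 x))) A = ennreal (\<integral>x. g1 x * indicator A x \<partial>lborel)"
    if A[measurable]: "A \<in> sets borel" for A
  proof -
    have "emeasure (density lborel (\<lambda>x. ennreal (g1 x))) A = (\<integral>\<^sup>+x. ennreal (g1 x) * indicator A x \<partial>lborel)"
      by (rule emeasure_density) auto
    also have "\<dots> = (\<integral>\<^sup>+x. ennreal (g1 x * indicator A x) \<partial>lborel)"
      by (intro nn_integral_cong) (auto simp: indicator_def)
    also have "\<dots> = ennreal (\<integral>x. g1 x * indicator A x \<partial>lborel)"
      by (rule nn_integral_eq_integral[OF intg1[OF A]]) (auto simp: g1_def)
    finally show ?thesis .
  qed
  have em2: "emeasure (density lborel (\<lambda>x. ennreal (g2 x))) A = ennreal (\<integral>x. g2 x * indicator A x \<partial>lborel)"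
    if A[measurable]: "A \<in> sets borel" for A
  proof -
    have "emeasure (density lborel (\<lambda>x. ennreal (g2 x))) A = (\<integral>\<^sup>+x. ennreal (g2 x) * indicator A x \<partial>lborel)"
      by (rule emeasure_density) auto
    also have "\<dots> = (\<integral>\<^sup>+x. ennreal (g2 x * indicator A x) \<partial>lborel)"
      by (intro nn_integral_cong) (auto simp: indicator_def)
    also have "\<dots> = ennreal (\<integral>x. g2 x * indicator A x \<partial>lborel)"
      by (rule nn_integral_eq_integral[OF intg2[OF A]]) (auto simp: g2_def)
    finally show ?thesis .
  qed
  let ?E = "range (\<lambda>(a, b). box a b :: (real^2) set)"
  have dens_eq: "density lborel (\<lambda>x. ennreal (g1 x)) = density lborel (\<lambda>x. ennreal (g2 x))"
  proof (rule measure_eqI_generator_eq[where E="?E" and \<Omega>=UNIV and A="\<lambda>i. box (\<chi> j. - real i) (\<chi> j. real i)"])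
    show "Int_stable ?E" by (auto simp: Int_stable_def box_Int_box)
    show "?E \<subseteq> Pow UNIV" by auto
    show "sets (density lborel (\<lambda>x. ennreal (g1 x))) = sigma_sets UNIV ?E"
      by (simp add: borel_eq_box)
    show "sets (density lborel (\<lambda>x. ennreal (g2 x))) = sigma_sets UNIV ?E"
      by (simp add: borel_eq_box)
    show "range (\<lambda>i. box (\<chi> j. - real i) (\<chi> j. real i)) \<subseteq> ?E" by auto
    show "(\<Union>i. box (\<chi> j. - real i) (\<chi> j. real i)) = (UNIV :: (real^2) set)"
    proof -
      have "x \<in> box (\<chi> j. - real (nat (ceiling (norm x)) + 1)) (\<chi> j. real (nat (ceiling (norm x)) + 1))" for x :: "real^2"
      proof -
        have "\<bar>x $ j\<bar> < real (nat (ceiling (norm x)) + 1)" for j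
          using component_le_norm_cart[of x j] by linarith
        then have "- real (nat (ceiling (norm x)) + 1) < x $ j \<and> x $ j < real (nat (ceiling (norm x)) + 1)" for j
          by (simp only: abs_less_iff) (metis minus_less_iff)
        then show ?thesis unfolding mem_box_cart by simp
      qed
      then show ?thesis by blast
    qed
    show "emeasure (density lborel (\<lambda>x. ennreal (g1 x))) (box (\<chi> j. - real i) (\<chi> j. real i)) \<noteq> \<infinity>" for i
      by (subst em1) auto
    fix X assume "X \<in> ?E"
    then obtain c d where X: "X = box c d" by auto
    obtain a' b' where ab: "B0 \<inter> box c d = box a' b'"
      unfolding B0_def box_Int_box by blast
    have "(\<integral>x. w x * indicator (box a' b') x \<partial>lborel) = 0"
      by (rule Z) (use ab B0_def in blast)
    moreover have "w x * indicator (box a' b') x = g1 x * indicator (box c d) x - g2 x * indicator (box c d) x" for x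
      using ab[symmetric] by (auto simp: g1_def g2_def indicator_def max_def)
    ultimately have "(\<integral>x. g1 x * indicator (box c d) x - g2 x * indicator (box c d) x \<partial>lborel) = 0"
      by simp
    then have "(\<integral>x. g1 x * indicator (box c d) x \<partial>lborel) = (\<integral>x. g2 x * indicator (box c d) x \<partial>lborel)"
      using intg1[of "box c d"] intg2[of "box c d"] by (simp add: Bochner_Integration.integral_diff)
    then show "emeasure (density lborel (\<lambda>x. ennreal (g1 x))) X = emeasure (density lborel (\<lambda>x. ennreal (g2 x))) X"
      unfolding X by (simp add: em1 em2)
  qed
  have "AE x in lborel. ennreal (g1 x) = ennreal (g2 x)"
  proof (rule finite_density_unique[THEN iffD1, OF _ _ _ _ _ dens_eq])
    show "integral\<^sup>N lborel (\<lambda>x. ennreal (g1 x)) \<noteq> \<infinity>"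
    proof -
      have "integral\<^sup>N lborel (\<lambda>x. ennreal (g1 x)) = emeasure (density lborel (\<lambda>x. ennreal (g1 x))) UNIV"
        by (subst emeasure_density) auto
      then show ?thesis using em1[of UNIV] by simp
    qed
  qed auto
  then show ?thesis
    by eventually_elim (auto simp: g1_def g2_def B0_def max_def split: if_splits)
qed



lemma box_int_zero:
  fixes w :: "real^2 \<Rightarrow> real"
  assumes \<Omega>: "open \<Omega>" and w: "integrable (lebesgue_on \<Omega>) w"
    and T: "\<And>\<phi>. test_fun \<Omega> \<phi> \<Longrightarrow> (\<integral>x. w x * \<phi> x \<partial>lebesgue_on \<Omega>) = 0"
    and ab: "closure (box a b) \<subseteq> \<Omega>"
  shows "(\<integral>x. w x * indicator (box a b) x \<partial>lebesgue_on \<Omega>) = 0"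
proof -
  have \<Omega>m: "\<Omega> \<in> sets lebesgue" using \<Omega> by (simp add: borel_open sets_completionI_sets)
  have "(\<lambda>n. \<integral>x. w x * bump (1 / Suc n) a b x \<partial>lebesgue_on \<Omega>) \<longlonglongrightarrow> (\<integral>x. w x * indicator (box a b) x \<partial>lebesgue_on \<Omega>)"
  proof (rule integral_dominated_convergence[where w="\<lambda>x. norm (w x)"])
    have bm: "bump (1 / Suc n) a b \<in> borel_measurable (lebesgue_on \<Omega>)" for n
      by (rule continuous_imp_measurable_on_sets_lebesgue[OF continuous_on_subset[OF bump_cont] \<Omega>m]) auto
    have wm: "w \<in> borel_measurable (lebesgue_on \<Omega>)" using w by (rule borel_measurable_integrable)
    show "(\<lambda>x. w x * bump (1 / Suc n) a b x) \<in> borel_measurable (lebesgue_on \<Omega>)" for n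
      using wm bm by (rule borel_measurable_times)
    have "indicator (box a b) \<in> borel_measurable (lebesgue_on \<Omega>)"
    proof (rule borel_measurable_indicator)
      have "box a b \<subseteq> \<Omega>" using ab closure_subset by blast
      then show "box a b \<in> sets (lebesgue_on \<Omega>)"
        using \<Omega>m by (subst sets_restrict_space_iff) (auto simp: borel_open sets_completionI_sets)
    qed
    then show "(\<lambda>x. w x * indicator (box a b) x) \<in> borel_measurable (lebesgue_on \<Omega>)"
      using wm by (intro borel_measurable_times)
    show "integrable (lebesgue_on \<Omega>) (\<lambda>x. norm (w x))" using w by (rule integrable_norm)
    show "AE x in lebesgue_on \<Omega>. (\<lambda>n. w x * bump (1 / Suc n) a b x) \<longlonglongrightarrow> w x * indicator (box a b) x"
      by (intro AE_I2 tendsto_mult tendsto_const bump_lim)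
    show "AE x in lebesgue_on \<Omega>. norm (w x * bump (1 / Suc n) a b x) \<le> norm (w x)" for n
    proof (intro AE_I2)
      fix x
      have "0 \<le> bump (1 / Suc n) a b x" "bump (1 / Suc n) a b x \<le> 1"
        by (auto intro: bump_nonneg bump_le1)
      then show "norm (w x * bump (1 / Suc n) a b x) \<le> norm (w x)"
        by (simp add: abs_mult mult_left_le)
    qed
  qed
  moreover have "(\<integral>x. w x * bump (1 / Suc n) a b x \<partial>lebesgue_on \<Omega>) = 0" for n
    by (rule T, rule test_bump[OF _ ab]) auto
  ultimately have "(\<lambda>n. 0) \<longlonglongrightarrow> (\<integral>x. w x * indicator (box a b) x \<partial>lebesgue_on \<Omega>)"
    by simp
  then show ?thesis by (simp add: LIMSEQ_const_iff)
qed

lemma fund_lemma: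
  fixes w :: "real^2 \<Rightarrow> real"
  assumes \<Omega>: "open \<Omega>" and w: "integrable (lebesgue_on \<Omega>) w"
    and T: "\<And>\<phi>. test_fun \<Omega> \<phi> \<Longrightarrow> (\<integral>x. w x * \<phi> x \<partial>lebesgue_on \<Omega>) = 0"
  shows "AE x in lebesgue_on \<Omega>. w x = 0"
proof -
  have \<Omega>m: "\<Omega> \<in> sets lebesgue" using \<Omega> by (simp add: borel_open sets_completionI_sets)
  have \<Omega>s: "\<Omega> \<inter> space lebesgue \<in> sets lebesgue" using \<Omega>m by simp
  define W where "W x = indicator \<Omega> x * w x" for x
  have Wi: "integrable lebesgue W"
    using w unfolding integrable_restrict_space[OF \<Omega>s] W_def by simp
  have "W \<in> borel_measurable (completion lborel)" using borel_measurable_integrable[OF Wi] by simp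
  then obtain w' where w'm: "w' \<in> borel_measurable lborel" and Ww': "AE x in lborel. W x = w' x"
    using completion_ex_borel_measurable_real by blast
  have Ww'L: "AE x in lebesgue. W x = w' x" using AE_completion[OF Ww'] .
  have "integrable lebesgue w'"
    using Wi _ Ww'L by (rule integrable_cong_AE_imp) (use w'm in \<open>auto intro: measurable_completion\<close>)
  then have w'i: "integrable lborel w'"
    using integrable_completion[of w' lborel] w'm by simp
  have Z: "(\<integral>x. w' x * indicator (box a b) x \<partial>lborel) = 0"
    if "box a b \<subseteq> box a0 b0" "closure (box a0 b0) \<subseteq> \<Omega>" for a b a0 b0
  proof -
    have cl: "closure (box a b) \<subseteq> \<Omega>" using that closure_mono by blast
    have bm: "(\<lambda>x. w' x * indicator (box a b) x) \<in> borel_measurable lborel" using w'm by measurable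
    have "(\<integral>x. w' x * indicator (box a b) x \<partial>lborel) = (\<integral>x. w' x * indicator (box a b) x \<partial>lebesgue)"
      using integral_completion[OF bm] by simp
    also have "\<dots> = (\<integral>x. W x * indicator (box a b) x \<partial>lebesgue)"
    proof (rule integral_cong_AE)
      show "(\<lambda>x. w' x * indicator (box a b) x) \<in> borel_measurable lebesgue"
        using bm by (rule measurable_completion)
      have "box a b \<in> sets lebesgue" by (simp add: borel_open sets_completionI_sets)
      then show "(\<lambda>x. W x * indicator (box a b) x) \<in> borel_measurable lebesgue"
        by (intro borel_measurable_times borel_measurable_integrable[OF Wi] borel_measurable_indicator)
      show "AE x in lebesgue. w' x * indicator (box a b) x = W x * indicator (box a b) x"
        using Ww'L by eventually_elim simp
    qed
    also have "\<dots> = (\<integral>x. indicator \<Omega> x *\<^sub>R (w x * indicator (box a b) x) \<partial>lebesgue)"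
      by (simp add: W_def mult.assoc)
    also have "\<dots> = (\<integral>x. w x * indicator (box a b) x \<partial>lebesgue_on \<Omega>)"
      by (rule integral_restrict_space[OF \<Omega>s, symmetric])
    also have "\<dots> = 0" by (rule box_int_zero[OF \<Omega> w T cl])
    finally show ?thesis .
  qed
  define F where "F = {box a b | a b :: real^2. closure (box a b) \<subseteq> \<Omega>}"
  have "\<Union>F = \<Omega>"
  proof
    show "\<Union>F \<subseteq> \<Omega>" unfolding F_def using closure_subset by blast
    show "\<Omega> \<subseteq> \<Union>F"
    proof
      fix x assume "x \<in> \<Omega>"
      then obtain a b where "cbox a b \<subseteq> \<Omega>" "x \<in> box a b" by (metis open_contains_cbox \<Omega>)
      moreover have "closure (box a b) \<subseteq> cbox a b" by (rule closure_minimal[OF box_subset_cbox closed_cbox])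
      ultimately show "x \<in> \<Union>F" unfolding F_def by blast
    qed
  qed
  moreover obtain F' where F': "F' \<subseteq> F" "countable F'" "\<Union>F' = \<Union>F"
    by (rule Lindelof[of F]) (auto simp: F_def)
  have "AE x in lborel. \<forall>B\<in>F'. x \<in> B \<longrightarrow> w' x = 0"
  proof (subst AE_ball_countable[OF F'(2)], intro ballI)
    fix B assume "B \<in> F'"
    then obtain a0 b0 where B: "B = box a0 b0" "closure (box a0 b0) \<subseteq> \<Omega>" using F'(1) F_def by blast
    show "AE x in lborel. x \<in> B \<longrightarrow> w' x = 0"
      unfolding B(1) by (rule ae_box_zero[OF w'i Z[OF _ B(2)]])
  qed
  then have "AE x in lborel. x \<in> \<Omega> \<longrightarrow> w' x = 0"
    using F'(3) \<open>\<Union>F = \<Omega>\<close> by (auto elim!: eventually_mono)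
  then have "AE x in lebesgue. x \<in> \<Omega> \<longrightarrow> w' x = 0" by (rule AE_completion)
  with Ww'L have "AE x in lebesgue. x \<in> \<Omega> \<longrightarrow> w x = 0"
    by eventually_elim (auto simp: W_def)
  then show ?thesis by (subst AE_restrict_space_iff[OF \<Omega>s])
qed



lemma line_deriv:
  assumes "\<phi> differentiable_on UNIV"
  shows "((\<lambda>t. \<phi> (x + t *\<^sub>R axis i 1)) has_real_derivative pderiv i \<phi> (x + t *\<^sub>R axis i 1)) (at t)"
proof -
  let ?e = "axis i (1::real) :: real^2"
  let ?D = "frechet_derivative \<phi> (at (x + t *\<^sub>R ?e))"
  have d1: "((\<lambda>t. x + t *\<^sub>R ?e) has_derivative (\<lambda>s. s *\<^sub>R ?e)) (at t)"
    by (auto intro!: derivative_eq_intros)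
  have d2: "(\<phi> has_derivative ?D) (at (x + t *\<^sub>R ?e))" by (rule diff_has[OF assms])
  have "((\<lambda>t. \<phi> (x + t *\<^sub>R ?e)) has_derivative (\<lambda>s. ?D (s *\<^sub>R ?e))) (at t)"
    using has_derivative_compose[OF d1 d2] by simp
  moreover have "(\<lambda>s. ?D (s *\<^sub>R ?e)) = (*) (pderiv i \<phi> (x + t *\<^sub>R ?e))"
  proof
    fix s show "?D (s *\<^sub>R ?e) = pderiv i \<phi> (x + t *\<^sub>R ?e) * s"
      using linear_cmul[OF has_derivative_linear[OF d2], of s ?e] by (simp add: pderiv_def)
  qed
  ultimately show ?thesis unfolding has_field_derivative_def by simp
qed



lemma ibp_zero:
  assumes \<Omega>: "open \<Omega>" and \<phi>: "test_fun \<Omega> \<phi>"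
  shows "integrable (lebesgue_on \<Omega>) (pderiv i \<phi>) \<and> (\<integral>x. pderiv i \<phi> x \<partial>lebesgue_on \<Omega>) = 0"
proof -
  define K where "K = closure {x. \<phi> x \<noteq> 0}"
  define e where "e = (axis i 1 :: real^2)"
  define p where "p = pderiv i \<phi>"
  have compK: "compact K" and K\<Omega>: "K \<subseteq> \<Omega>" and sm: "smooth \<phi>"
    using \<phi> unfolding test_fun_def compact_support_in_def K_def by auto
  have C1: "Ck (Suc 0) \<phi>" using sm unfolding smooth_def by blast
  then have C1': "\<phi> differentiable_on UNIV \<and> continuous_on UNIV \<phi> \<and> (\<forall>j. Ck 0 (pderiv j \<phi>))"
    by (simp only: Ck.simps(2) simp_thms)
  then have diff\<phi>: "\<phi> differentiable_on UNIV" and cont\<phi>: "continuous_on UNIV \<phi>"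
    and contp: "continuous_on UNIV p" unfolding p_def by (simp_all only: Ck.simps(1))
  have sub: "{x. \<phi> x \<noteq> 0} \<subseteq> K" unfolding K_def by (rule closure_subset)
  have \<phi>0: "\<phi> x = 0" if "x \<notin> K" for x using that sub by blast
  have p0: "p x = 0" if "x \<notin> K" for x
  proof -
    have "((\<lambda>x. 0) has_derivative (\<lambda>h. 0)) (at x)" by simp
    then have "(\<phi> has_derivative (\<lambda>h. 0)) (at x)"
      by (rule has_derivative_transform_within_open[of _ _ _ _ "- K"])
        (use that compK \<phi>0 in \<open>auto intro: compact_imp_closed\<close>)
    then show ?thesis unfolding p_def by (simp add: pderiv_eq)
  qed
  obtain R where R: "\<And>x. x \<in> K \<Longrightarrow> norm x \<le> R"
    using compact_imp_bounded[OF compK] unfolding bounded_iff by blast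
  obtain B where B: "\<And>y. y \<in> p ` K \<Longrightarrow> norm y \<le> B"
    using compact_imp_bounded[OF compact_continuous_image[OF continuous_on_subset[OF contp] compK]]
    unfolding bounded_iff by blast
  define M where "M = max B 0"
  have M: "\<bar>p x\<bar> \<le> M" for x
    using B[of "p x"] p0[of x] by (cases "x \<in> K") (auto simp: M_def)
  have M0: "M \<ge> 0" by (simp add: M_def)
  have gder: "((\<lambda>t. \<phi> (x + t *\<^sub>R e)) has_real_derivative p (x + t *\<^sub>R e)) (at t)" for x t
    unfolding p_def e_def by (rule line_deriv[OF diff\<phi>])
  define h where "h n = 1 / real (Suc n)" for n
  have hpos: "h n > 0" for n by (simp add: h_def)
  have hle: "h n \<le> 1" for n by (simp add: h_def)
  define q where "q n x = (\<phi> (x + h n *\<^sub>R e) - \<phi> x) / h n" for n x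
  have \<phi>m[measurable]: "\<phi> \<in> borel_measurable borel" by (rule borel_measurable_continuous_onI[OF cont\<phi>])
  have pm[measurable]: "p \<in> borel_measurable borel" by (rule borel_measurable_continuous_onI[OF contp])
  have \<phi>i: "integrable lborel \<phi>"
  proof -
    have "integrable lborel (\<lambda>x. indicator K x *\<^sub>R \<phi> x)"
      by (rule borel_integrable_compact[OF compK continuous_on_subset[OF cont\<phi>]]) simp
    moreover have "(\<lambda>x. indicator K x *\<^sub>R \<phi> x) = \<phi>"
    proof
      fix x show "indicator K x *\<^sub>R \<phi> x = \<phi> x" using \<phi>0[of x] by (cases "x \<in> K") auto
    qed
    ultimately show ?thesis by simp
  qed
  have transl: "integrable lborel (\<lambda>x. \<phi> (c + x)) \<and> (\<integral>x. \<phi> (c + x) \<partial>lborel) = (\<integral>x. \<phi> x \<partial>lborel)" for c :: "real^2"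
  proof -
    have cm: "((+) c) \<in> measurable lborel borel" by simp
    have "integrable (distr lborel borel ((+) c)) \<phi>" using \<phi>i by (simp add: lborel_distr_plus)
    then have I: "integrable lborel (\<lambda>x. \<phi> (c + x))" by (subst (asm) integrable_distr_eq[OF cm]) auto
    have "(\<integral>x. \<phi> x \<partial>lborel) = (\<integral>x. \<phi> x \<partial>distr lborel borel ((+) c))"
      by (simp add: lborel_distr_plus)
    also have "\<dots> = (\<integral>x. \<phi> (c + x) \<partial>lborel)" by (rule integral_distr[OF cm]) simp
    finally show ?thesis using I by simp
  qed
  have qint0: "(\<integral>x. q n x \<partial>lborel) = 0" for n
  proof -
    have "(\<integral>x. q n x \<partial>lborel) = (\<integral>x. \<phi> (x + h n *\<^sub>R e) - \<phi> x \<partial>lborel) / h n"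
      unfolding q_def by (rule integral_divide_zero)
    also have "(\<integral>x. \<phi> (x + h n *\<^sub>R e) - \<phi> x \<partial>lborel) = (\<integral>x. \<phi> (h n *\<^sub>R e + x) \<partial>lborel) - (\<integral>x. \<phi> x \<partial>lborel)"
      using transl[of "h n *\<^sub>R e"] \<phi>i by (simp add: add.commute Bochner_Integration.integral_diff)
    also have "\<dots> = 0" using transl[of "h n *\<^sub>R e"] by simp
    finally show ?thesis by simp
  qed
  have hlim: "filterlim h (at 0) sequentially"
  proof -
    have "h \<longlonglongrightarrow> 0" unfolding h_def by (rule LIMSEQ_Suc[OF lim_const_over_n])
    moreover have "eventually (\<lambda>n. h n \<in> UNIV \<and> h n \<noteq> 0) sequentially"
      using hpos by (simp add: less_imp_neq[symmetric])
    ultimately show ?thesis by (simp add: filterlim_at)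
  qed
  have qlim: "(\<lambda>n. q n x) \<longlonglongrightarrow> p x" for x
  proof -
    have "((\<lambda>y. (\<phi> (x + y *\<^sub>R e) - \<phi> (x + 0 *\<^sub>R e)) / (y - 0)) \<longlongrightarrow> p (x + 0 *\<^sub>R e)) (at 0)"
      using gder[of x 0] by (simp only: has_field_derivative_iff)
    then have "((\<lambda>y. (\<phi> (x + y *\<^sub>R e) - \<phi> x) / y) \<longlongrightarrow> p x) (at 0)" by simp
    from filterlim_compose[OF this hlim] show ?thesis by (simp add: q_def)
  qed
  define S where "S = cball (0::real^2) (R + 1)"
  have qbound: "norm (q n x) \<le> indicator S x *\<^sub>R M" for n x
  proof (cases "x \<in> S")
    case True
    have "\<exists>z. 0 < z \<and> z < h n \<and> \<phi> (x + h n *\<^sub>R e) - \<phi> (x + 0 *\<^sub>R e) = (h n - 0) * p (x + z *\<^sub>R e)"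
      by (rule MVT2[OF hpos[of n]]) (rule gder)
    then obtain z where "0 < z" "z < h n" "\<phi> (x + h n *\<^sub>R e) - \<phi> (x + 0 *\<^sub>R e) = (h n - 0) * p (x + z *\<^sub>R e)"
      by blast
    then have "q n x = p (x + z *\<^sub>R e)" using hpos[of n] by (simp add: q_def)
    then show ?thesis using True M by simp
  next
    case False
    then have nx: "norm x > R + 1" by (simp add: S_def)
    have "x \<notin> K"
    proof
      assume "x \<in> K" then have "norm x \<le> R" by (rule R)
      then show False using nx by linarith
    qed
    moreover have "x + h n *\<^sub>R e \<notin> K"
    proof
      assume "x + h n *\<^sub>R e \<in> K"
      then have "norm (x + h n *\<^sub>R e) \<le> R" by (rule R)
      moreover have "norm x \<le> norm (x + h n *\<^sub>R e) + h n"
        using norm_triangle_ineq4[of "x + h n *\<^sub>R e" "h n *\<^sub>R e"] hpos[of n] by (simp add: e_def)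
      ultimately show False using nx hle[of n] by linarith
    qed
    ultimately have "q n x = 0" by (simp add: q_def \<phi>0)
    then show ?thesis using False by simp
  qed
  have wi: "integrable lborel (\<lambda>x. indicator S x *\<^sub>R M)"
    by (rule borel_integrable_compact) (auto simp: S_def)
  have qm: "q n \<in> borel_measurable lborel" for n unfolding q_def by measurable
  have pi: "integrable lborel p"
    by (rule integrable_dominated_convergence[OF _ qm wi]) (simp, rule AE_I2[OF qlim], rule AE_I2[OF qbound])
  have "(\<lambda>n. \<integral>x. q n x \<partial>lborel) \<longlonglongrightarrow> (\<integral>x. p x \<partial>lborel)"
    by (rule integral_dominated_convergence[OF _ qm wi]) (simp, rule AE_I2[OF qlim], rule AE_I2[OF qbound])
  then have pint0: "(\<integral>x. p x \<partial>lborel) = 0" using qint0 by (simp add: LIMSEQ_const_iff)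
  have \<Omega>s: "\<Omega> \<inter> space lebesgue \<in> sets lebesgue" using \<Omega> by (simp add: borel_open sets_completionI_sets)
  have ind: "(\<lambda>x. indicator \<Omega> x * p x) = p"
  proof
    fix x show "indicator \<Omega> x * p x = p x" using p0[of x] K\<Omega> by (cases "x \<in> \<Omega>") auto
  qed
  have pl: "integrable lebesgue p" using pi integrable_completion[of p lborel] by simp
  have "integrable lebesgue (\<lambda>x. indicator \<Omega> x *\<^sub>R p x)" using pl by (simp only: ind scaleR_conv_of_real of_real_def[symmetric]) (simp add: ind)
  then have "integrable (lebesgue_on \<Omega>) p" by (simp only: integrable_restrict_space[OF \<Omega>s])
  moreover have "(\<integral>x. p x \<partial>lebesgue_on \<Omega>) = (\<integral>x. indicator \<Omega> x *\<^sub>R p x \<partial>lebesgue)"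
    by (rule integral_restrict_space[OF \<Omega>s])
  moreover have "(\<integral>x. indicator \<Omega> x *\<^sub>R p x \<partial>lebesgue) = (\<integral>x. p x \<partial>lebesgue)"
    using ind by simp
  moreover have "(\<integral>x. p x \<partial>lebesgue) = (\<integral>x. p x \<partial>lborel)"
    by (rule integral_completion) simp
  ultimately have "integrable (lebesgue_on \<Omega>) p \<and> (\<integral>x. p x \<partial>lebesgue_on \<Omega>) = 0" using pint0 by simp
  then show ?thesis by (simp add: p_def)
qed



lemma const_H1:
  assumes \<Omega>: "open \<Omega>" "bounded \<Omega>"
  shows "H1 \<Omega> (\<lambda>x. 1)" and "is_weak_grad \<Omega> (\<lambda>x. 1) (\<lambda>x. 0)"
proof -
  have \<Omega>m: "\<Omega> \<in> sets lebesgue" using \<Omega> by (simp add: borel_open sets_completionI_sets)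
  have \<Omega>s: "\<Omega> \<inter> space lebesgue \<in> sets lebesgue" using \<Omega>m by simp
  have fin: "emeasure lebesgue \<Omega> < \<infinity>"
    using fmeasurableD2[OF bounded_set_imp_lmeasurable[OF \<Omega>(2) \<Omega>m]] by (metis infinity_ennreal_def less_top)
  have "integrable lebesgue (indicator \<Omega> :: real^2 \<Rightarrow> real)"
    using \<Omega>m fin by (rule integrable_real_indicator)
  then have i1: "integrable (lebesgue_on \<Omega>) (\<lambda>x::real^2. 1::real)"
    by (simp add: integrable_restrict_space[OF \<Omega>s])
  have L1: "L2 \<Omega> (\<lambda>x. 1::real)" unfolding L2_def using i1 by simp
  have L0: "L2 \<Omega> (\<lambda>x. 0 :: real^2)" unfolding L2_def by simp
  show wg: "is_weak_grad \<Omega> (\<lambda>x. 1) (\<lambda>x. 0)"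
    unfolding is_weak_grad_def using ibp_zero[OF \<Omega>(1)] by simp
  show "H1 \<Omega> (\<lambda>x. 1)" unfolding H1_def using L1 L0 wg by blast
qed

theorem proposition6p7:
  fixes \<Omega> :: "(real^2) set" and k :: real and f u S :: "real^2 \<Rightarrow> real"
  assumes "bounded_lipschitz_domain \<Omega>"
    and "0 < k" and "k < 1"
    and "L2 \<Omega> f" and "(\<integral>x. f x \<partial>lebesgue_on \<Omega>) \<noteq> 0"
    and "BV01 \<Omega> u"
    and "\<not> (AE x in lebesgue_on \<Omega>. u x = 1)"
    and "H1 \<Omega> S"
    and "\<forall>v. H1 \<Omega> v \<longrightarrow>
           (\<integral>x. coef_a k (u x) * (wgrad \<Omega> S x \<bullet> wgrad \<Omega> v x) \<partial>lebesgue_on \<Omega>)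
         + (\<integral>x. coef_b (u x) * (S x)^3 * v x \<partial>lebesgue_on \<Omega>)
         = (\<integral>x. f x * v x \<partial>lebesgue_on \<Omega>)"
  shows "\<exists>\<Omega>s Q. \<Omega>s \<in> sets lebesgue \<and> \<Omega>s \<subseteq> \<Omega> \<and> emeasure lebesgue \<Omega>s \<noteq> 0 \<and> Q > 0 \<and>
           (AE x in lebesgue_on \<Omega>s. coef_b (u x) * (S x)^2 \<ge> Q)"
proof (rule ccontr)
  assume neg: "\<not> ?thesis"
  have \<Omega>o: "open \<Omega>" and \<Omega>b: "bounded \<Omega>"
    using assms(1) unfolding bounded_lipschitz_domain_def lipschitz_domain_def by auto
  have \<Omega>m: "\<Omega> \<in> sets lebesgue" using \<Omega>o by (simp add: borel_open sets_completionI_sets)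
  have \<Omega>s: "\<Omega> \<inter> space lebesgue \<in> sets lebesgue" using \<Omega>m by simp
  have um: "u \<in> borel_measurable (lebesgue_on \<Omega>)"
    using assms(6) unfolding BV01_def L1_def by (auto intro: borel_measurable_integrable)
  have u01: "AE x in lebesgue_on \<Omega>. 0 \<le> u x \<and> u x \<le> 1"
    using assms(6) unfolding BV01_def by auto
  have Sm: "S \<in> borel_measurable (lebesgue_on \<Omega>)"
    using assms(8) unfolding H1_def L2_def by auto
  define G where "G x = coef_b (u x) * (S x)^2" for x
  have Gm: "G \<in> borel_measurable (lebesgue_on \<Omega>)"
    unfolding G_def coef_b_def using um Sm by measurable
  define A where "A n = {x \<in> \<Omega>. G x \<ge> 1 / real (Suc n)}" for n
  have A_sets: "A n \<in> sets lebesgue" for n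
  proof -
    have "{x \<in> space (lebesgue_on \<Omega>). 1 / real (Suc n) \<le> G x} \<in> sets (lebesgue_on \<Omega>)"
      using Gm by measurable
    then have "A n \<in> sets (lebesgue_on \<Omega>)" by (simp add: A_def)
    then show ?thesis using \<Omega>s by (simp add: sets_restrict_space_iff)
  qed
  have A_null: "A n \<in> null_sets lebesgue" for n
  proof -
    have sub: "A n \<subseteq> \<Omega>" by (auto simp: A_def)
    have ae: "AE x in lebesgue_on (A n). coef_b (u x) * (S x)^2 \<ge> 1 / real (Suc n)"
      by (rule AE_I2) (auto simp: A_def G_def)
    have "emeasure lebesgue (A n) = 0"
    proof (rule ccontr)
      assume "emeasure lebesgue (A n) \<noteq> 0"
      then have "\<exists>\<Omega>s Q. \<Omega>s \<in> sets lebesgue \<and> \<Omega>s \<subseteq> \<Omega> \<and> emeasure lebesgue \<Omega>s \<noteq> 0 \<and> Q > 0 \<and>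
           (AE x in lebesgue_on \<Omega>s. coef_b (u x) * (S x)^2 \<ge> Q)"
        using A_sets[of n] sub ae by (intro exI[of _ "A n"] exI[of _ "1 / real (Suc n)"]) simp
      then show False using neg by blast
    qed
    then show ?thesis using A_sets[of n] by (simp add: null_sets_def)
  qed
  have "AE x in lebesgue. \<forall>n. x \<notin> A n"
    using A_null by (subst AE_all_countable) (auto intro: AE_not_in)
  then have "AE x in lebesgue. x \<in> \<Omega> \<longrightarrow> G x \<le> 0"
  proof eventually_elim
    case (elim x)
    show ?case
    proof
      assume x: "x \<in> \<Omega>"
      show "G x \<le> 0"
      proof (rule ccontr)
        assume "\<not> G x \<le> 0"
        then obtain n where "inverse (real (Suc n)) < G x" using reals_Archimedean[of "G x"] by auto
        then have "x \<in> A n" using x by (auto simp: A_def inverse_eq_divide)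
        then show False using elim by blast
      qed
    qed
  qed
  then have G0: "AE x in lebesgue_on \<Omega>. G x \<le> 0" by (subst AE_restrict_space_iff[OF \<Omega>s])
  have bS3: "AE x in lebesgue_on \<Omega>. coef_b (u x) * (S x)^3 * 1 = 0"
    using G0 u01
  proof eventually_elim
    case (elim x)
    have "0 \<le> coef_b (u x) * (S x)^2" using elim by (simp add: coef_b_def)
    then have "coef_b (u x) * (S x)^2 = 0" using elim by (simp add: G_def)
    then have "coef_b (u x) * (S x)^2 * S x = 0" by simp
    then show ?case by (simp add: power3_eq_cube power2_eq_square mult.assoc)
  qed
  have H1c: "H1 \<Omega> (\<lambda>x. 1)" by (rule const_H1[OF \<Omega>o \<Omega>b])
  define g where "g = wgrad \<Omega> (\<lambda>x. 1)"
  have gw: "is_weak_grad \<Omega> (\<lambda>x. 1) g \<and> L2 \<Omega> g"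
  proof -
    have ex: "\<exists>g. is_weak_grad \<Omega> (\<lambda>x. 1) g \<and> L2 \<Omega> g" using H1c unfolding H1_def by (rule conjunct2)
    show ?thesis unfolding g_def wgrad_def by (rule someI_ex[OF ex])
  qed
  have gm: "g \<in> borel_measurable (lebesgue_on \<Omega>)" and g2: "integrable (lebesgue_on \<Omega>) (\<lambda>x. (norm (g x))^2)"
    using gw unfolding L2_def by auto
  have fin: "emeasure lebesgue \<Omega> < \<infinity>"
    using fmeasurableD2[OF bounded_set_imp_lmeasurable[OF \<Omega>b \<Omega>m]] by (metis infinity_ennreal_def less_top)
  have "integrable lebesgue (indicator \<Omega> :: real^2 \<Rightarrow> real)"
    using \<Omega>m fin by (rule integrable_real_indicator)
  then have i1: "integrable (lebesgue_on \<Omega>) (\<lambda>x::real^2. 1::real)"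
    by (simp add: integrable_restrict_space[OF \<Omega>s])
  have gcomp: "AE x in lebesgue_on \<Omega>. g x $ i = 0" for i
  proof (rule fund_lemma[OF \<Omega>o])
    have gim: "(\<lambda>x. g x $ i) \<in> borel_measurable (lebesgue_on \<Omega>)"
      by (rule measurable_compose[OF gm borel_measurable_continuous_onI[OF linear_continuous_on[OF bounded_linear_vec_nth]]])
    show "integrable (lebesgue_on \<Omega>) (\<lambda>x. g x $ i)"
    proof (rule Bochner_Integration.integrable_bound[OF Bochner_Integration.integrable_add[OF i1 g2] gim])
      show "AE x in lebesgue_on \<Omega>. norm (g x $ i) \<le> norm (1 + (norm (g x))^2)"
      proof (rule AE_I2)
        fix x
        have "\<bar>g x $ i\<bar> \<le> norm (g x)" by (rule component_le_norm_cart)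
        moreover have "norm (g x) \<le> 1 + (norm (g x))^2"
        proof (cases "norm (g x) \<le> 1")
          case True then show ?thesis by (simp add: add_increasing2)
        next
          case False
          then have "norm (g x) * 1 \<le> norm (g x) * norm (g x)" by (intro mult_left_mono) auto
          then show ?thesis by (simp add: power2_eq_square)
        qed
        ultimately show "norm (g x $ i) \<le> norm (1 + (norm (g x))^2)" by simp
      qed
    qed
    fix \<phi> assume t: "test_fun \<Omega> \<phi>"
    have "(\<integral>x. 1 * pderiv i \<phi> x \<partial>lebesgue_on \<Omega>) = - (\<integral>x. g x $ i * \<phi> x \<partial>lebesgue_on \<Omega>)"
      using gw t unfolding is_weak_grad_def by simp
    then show "(\<integral>x. g x $ i * \<phi> x \<partial>lebesgue_on \<Omega>) = 0"
      using ibp_zero[OF \<Omega>o t, of i] by simp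
  qed
  have g0: "AE x in lebesgue_on \<Omega>. g x = 0"
    using gcomp[of 1] gcomp[of 2] by eventually_elim (simp add: vec_eq_iff forall_2)
  have "(\<integral>x. coef_a k (u x) * (wgrad \<Omega> S x \<bullet> g x) \<partial>lebesgue_on \<Omega>)
         + (\<integral>x. coef_b (u x) * (S x)^3 * 1 \<partial>lebesgue_on \<Omega>)
         = (\<integral>x. f x * 1 \<partial>lebesgue_on \<Omega>)"
    unfolding g_def by (rule mp[OF spec[OF assms(9), of "\<lambda>x. 1"] H1c])
  moreover have "(\<integral>x. coef_a k (u x) * (wgrad \<Omega> S x \<bullet> g x) \<partial>lebesgue_on \<Omega>) = 0"
    by (rule integral_eq_zero_AE) (use g0 in \<open>eventually_elim, simp\<close>)
  moreover have "(\<integral>x. coef_b (u x) * (S x)^3 * 1 \<partial>lebesgue_on \<Omega>) = 0"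
    by (rule integral_eq_zero_AE[OF bS3])
  ultimately have "(\<integral>x. f x \<partial>lebesgue_on \<Omega>) = 0" by simp
  then show False using assms(5) by simp
qed

end
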